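(* Let $0<b<1$ and let $(G,\lambda)$ be a soft-hardcore model on $G=(V,E)$ that is $b$-marginally bounded. For every $v\in V$, let $\deg^{\mathrm{free}}_v$ be the number of neighbors $u$ of $v$ with $\lambda_u>0$. Then for every $v\in V$, $\deg^{\mathrm{free}}_v\le\frac{\ln b}{\ln(1-b)}$.
   Context: Hardcore model $(G,\lambda)$: weight $\prod_{v:\sigma_v=+1}\lambda_v$ for $\sigma\in\{-1,+1\}^V$ with $\{v:\sigma_v=+1\}$ independent, else $0$; Gibbs distribution $\mu$ is the normalized weight. Soft: $\lambda_v>0$ for all $v$. $b$-marginally bounded: for every $\Lambda\subseteq V$, feasible $\sigma\in\{\pm1\}^\Lambda$, $v\in V$, $c\in\{\pm1\}$, $\mu^\sigma_v(c)>0$ implies $\mu^\sigma_v(c)\ge b$. *)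

theory Defs
  imports Complex_Main
begin

text \<open>Graph G = (V,E): finite vertex set V, edge relation E (symmetric, irreflexive, on V).
A full configuration in {-1,+1}^V is represented by the set S of vertices with spin +1.\<close>

definition independent :: "('a \<Rightarrow> 'a \<Rightarrow> bool) \<Rightarrow> 'a set \<Rightarrow> bool" where
  "independent E S \<longleftrightarrow> (\<forall>u\<in>S. \<forall>w\<in>S. \<not> E u w)"

definition hc_weight :: "('a \<Rightarrow> 'a \<Rightarrow> bool) \<Rightarrow> ('a \<Rightarrow> real) \<Rightarrow> 'a set \<Rightarrow> real" where
  "hc_weight E lam S = (if independent E S then (\<Prod>v\<in>S. lam v) else 0)"

definition agrees :: "'a set \<Rightarrow> ('a \<Rightarrow> int) \<Rightarrow> 'a set \<Rightarrow> bool" where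
  "agrees Lam sigma S \<longleftrightarrow> (\<forall>u\<in>Lam. (sigma u = 1 \<longleftrightarrow> u \<in> S))"

definition pin_mass :: "'a set \<Rightarrow> ('a \<Rightarrow> 'a \<Rightarrow> bool) \<Rightarrow> ('a \<Rightarrow> real) \<Rightarrow> 'a set \<Rightarrow> ('a \<Rightarrow> int) \<Rightarrow> real" where
  "pin_mass V E lam Lam sigma = (\<Sum>S\<in>{S. S \<subseteq> V \<and> agrees Lam sigma S}. hc_weight E lam S)"

definition feasible :: "'a set \<Rightarrow> ('a \<Rightarrow> 'a \<Rightarrow> bool) \<Rightarrow> ('a \<Rightarrow> real) \<Rightarrow> 'a set \<Rightarrow> ('a \<Rightarrow> int) \<Rightarrow> bool" where
  "feasible V E lam Lam sigma \<longleftrightarrow> (\<forall>u\<in>Lam. sigma u \<in> {-1, 1}) \<and> pin_mass V E lam Lam sigma > 0"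

definition cond_marginal :: "'a set \<Rightarrow> ('a \<Rightarrow> 'a \<Rightarrow> bool) \<Rightarrow> ('a \<Rightarrow> real) \<Rightarrow> 'a set \<Rightarrow> ('a \<Rightarrow> int) \<Rightarrow> 'a \<Rightarrow> int \<Rightarrow> real" where
  "cond_marginal V E lam Lam sigma v c =
     (\<Sum>S\<in>{S. S \<subseteq> V \<and> agrees Lam sigma S \<and> (v \<in> S \<longleftrightarrow> c = 1)}. hc_weight E lam S)
     / pin_mass V E lam Lam sigma"

definition marginally_bounded :: "'a set \<Rightarrow> ('a \<Rightarrow> 'a \<Rightarrow> bool) \<Rightarrow> ('a \<Rightarrow> real) \<Rightarrow> real \<Rightarrow> bool" where
  "marginally_bounded V E lam b \<longleftrightarrow>
     (\<forall>Lam sigma v c. Lam \<subseteq> V \<and> feasible V E lam Lam sigma \<and> v \<in> V \<and> c \<in> {-1, 1} \<and>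
        cond_marginal V E lam Lam sigma v c > 0 \<longrightarrow> cond_marginal V E lam Lam sigma v c \<ge> b)"

definition soft :: "'a set \<Rightarrow> ('a \<Rightarrow> real) \<Rightarrow> bool" where
  "soft V lam \<longleftrightarrow> (\<forall>v\<in>V. lam v > 0)"

definition free_degree :: "'a set \<Rightarrow> ('a \<Rightarrow> 'a \<Rightarrow> bool) \<Rightarrow> ('a \<Rightarrow> real) \<Rightarrow> 'a \<Rightarrow> nat" where
  "free_degree V E lam v = card {u \<in> V. E v u \<and> lam u > 0}"

end

theory Submission
  imports Defs
begin

lemma agrees_neg: "agrees T (\<lambda>_. -1) S \<longleftrightarrow> T \<inter> S = {}"
  by (auto simp: agrees_def)

theorem lemma6p5:
  fixes V :: "'a set" and E :: "'a \<Rightarrow> 'a \<Rightarrow> bool" and lam :: "'a \<Rightarrow> real" and b :: real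
  assumes "finite V"
    and "\<And>u w. E u w \<Longrightarrow> u \<in> V \<and> w \<in> V"
    and "\<And>u w. E u w \<Longrightarrow> E w u"
    and "\<And>u. \<not> E u u"
    and "0 < b" and "b < 1"
    and "soft V lam"
    and "marginally_bounded V E lam b"
  shows "\<forall>v\<in>V. real (free_degree V E lam v) \<le> ln b / ln (1 - b)"
proof
  fix v assume vV: "v \<in> V"
  define N where "N = {u \<in> V. E v u \<and> lam u > 0}"
  define sg :: "'a \<Rightarrow> int" where "sg = (\<lambda>_. -1)"
  define M where "M T = pin_mass V E lam T sg" for T
  have finP: "finite {S. S \<subseteq> V \<and> Q S}" for Q
    using assms(1) by (rule finite_subset[rotated, OF finite_Pow_iff[THEN iffD2]]) auto
  have nonneg: "S \<subseteq> V \<Longrightarrow> hc_weight E lam S \<ge> 0" for S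
    using assms(7) unfolding hc_weight_def soft_def
    by (auto intro!: prod_nonneg less_imp_le prod_pos)
  have Msimp: "M T = (\<Sum>S\<in>{S. S \<subseteq> V \<and> T \<inter> S = {}}. hc_weight E lam S)" for T
    unfolding M_def pin_mass_def sg_def agrees_neg by simp
  have hc_single: "u \<in> V \<Longrightarrow> hc_weight E lam {u} = lam u" for u
    using assms(4) by (simp add: hc_weight_def independent_def)
  have lampos: "u \<in> V \<Longrightarrow> lam u > 0" for u using assms(7) by (simp add: soft_def)
  have Mpos: "M T > 0" for T
  proof -
    have "hc_weight E lam {} = 1" by (simp add: hc_weight_def independent_def)
    moreover have "hc_weight E lam {} \<le> M T" unfolding Msimp
      by (rule member_le_sum) (auto intro: nonneg finP)
    ultimately show ?thesis by simp
  qed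
  have feas: "feasible V E lam T sg" for T
    using Mpos[of T] by (simp add: feasible_def sg_def M_def)
  have step: "M (insert u T) \<le> (1 - b) * M T" if uV: "u \<in> V" and uT: "u \<notin> T" and TV: "T \<subseteq> V" for u T
  proof -
    define W1 where "W1 = (\<Sum>S\<in>{S. S \<subseteq> V \<and> T \<inter> S = {} \<and> u \<in> S}. hc_weight E lam S)"
    have cm: "cond_marginal V E lam T sg u 1 = W1 / M T"
      unfolding cond_marginal_def W1_def M_def sg_def agrees_neg by simp
    have "hc_weight E lam {u} \<le> W1" unfolding W1_def
      by (rule member_le_sum) (use uV uT in \<open>auto intro: nonneg finP\<close>)
    with hc_single[OF uV] lampos[OF uV] have W1pos: "W1 > 0" by simp
    have "cond_marginal V E lam T sg u 1 \<ge> b"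
      using assms(8) feas[of T] uV W1pos Mpos[of T] cm TV
      unfolding marginally_bounded_def
      by (metis (no_types, lifting) divide_pos_pos insert_iff)
    hence W1b: "W1 \<ge> b * M T" using cm Mpos[of T] by (simp add: le_divide_eq)
    have split: "{S. S \<subseteq> V \<and> T \<inter> S = {}} = {S. S \<subseteq> V \<and> T \<inter> S = {} \<and> u \<in> S} \<union> {S. S \<subseteq> V \<and> insert u T \<inter> S = {}}"
      by auto
    have "M T = W1 + M (insert u T)"
      unfolding Msimp[of T] Msimp[of "insert u T"] W1_def split
      by (rule sum.union_disjoint) (auto intro: finP)
    with W1b show ?thesis by (simp add: algebra_simps)
  qed
  have ind: "finite F \<Longrightarrow> F \<subseteq> V \<Longrightarrow> M F \<le> (1 - b) ^ card F * M {}" for F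
  proof (induction F rule: finite_induct)
    case empty then show ?case by simp
  next
    case (insert x F)
    have "M (insert x F) \<le> (1 - b) * M F" using insert by (intro step) auto
    also have "\<dots> \<le> (1 - b) * ((1 - b) ^ card F * M {})"
      using insert assms(6) by (intro mult_left_mono) auto
    finally show ?case using insert by simp
  qed
  have NV: "N \<subseteq> V" and finN: "finite N" using assms(1) by (auto simp: N_def)
  define Wv where "Wv = (\<Sum>S\<in>{S. S \<subseteq> V \<and> v \<in> S}. hc_weight E lam S)"
  have cmv: "cond_marginal V E lam {} sg v 1 = Wv / M {}"
    unfolding cond_marginal_def Wv_def M_def sg_def agrees_neg by simp
  have "hc_weight E lam {v} \<le> Wv" unfolding Wv_def
    by (rule member_le_sum) (use vV in \<open>auto intro: nonneg finP\<close>)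
  with hc_single[OF vV] lampos[OF vV] have Wvpos: "Wv > 0" by simp
  have "cond_marginal V E lam {} sg v 1 \<ge> b"
    using assms(8) feas[of "{}"] vV Wvpos Mpos[of "{}"] cmv
    unfolding marginally_bounded_def
    by (metis (no_types, lifting) divide_pos_pos empty_subsetI insert_iff)
  hence Wvb: "Wv \<ge> b * M {}" using cmv Mpos[of "{}"] by (simp add: le_divide_eq)
  have "(\<Sum>S\<in>{S. S \<subseteq> V \<and> v \<in> S} \<inter> {S. N \<inter> S = {}}. hc_weight E lam S) = Wv"
    unfolding Wv_def
    by (rule sum.mono_neutral_left) (auto intro: finP simp: hc_weight_def independent_def N_def)
  hence "Wv = (\<Sum>S\<in>{S. S \<subseteq> V \<and> v \<in> S} \<inter> {S. N \<inter> S = {}}. hc_weight E lam S)" by simp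
  also have "\<dots> \<le> M N" unfolding Msimp
    by (rule sum_mono2) (auto intro: finP nonneg)
  also have "\<dots> \<le> (1 - b) ^ card N * M {}" using ind finN NV by blast
  finally have "b * M {} \<le> (1 - b) ^ card N * M {}" using Wvb by linarith
  hence bb: "b \<le> (1 - b) ^ card N" using Mpos[of "{}"] by simp
  have "ln b \<le> ln ((1 - b) ^ card N)" using bb assms(5) by simp
  also have "\<dots> = real (card N) * ln (1 - b)" using assms(6) by (simp add: ln_realpow)
  finally have L: "ln b \<le> real (card N) * ln (1 - b)" .
  have neg: "ln (1 - b) < 0" using assms(5,6) by simp
  have "real (card N) \<le> ln b / ln (1 - b)" using L neg by (simp add: le_divide_eq)
  then show "real (free_degree V E lam v) \<le> ln b / ln (1 - b)"
    by (simp add: free_degree_def N_def)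
qed

end
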